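(* Let $\theta\in\mathbb R\setminus\mathbb Q$. Then $H^1(\mathcal A_\theta^{alg},{}_{-1}\mathcal A_\theta^{alg*})=0$.
   Context: Let $\lambda=e^{2\pi i\theta}$. $\mathcal A_\theta^{alg}$ is the complex algebra of finite linear combinations $\sum a_{n,m}U_1^nU_2^m$ generated by invertible $U_1,U_2$ with $U_2U_1=\lambda U_1U_2$. Its linear dual $\mathcal A_\theta^{alg*}$ is identified with the space of formal series $\sum_{(n,m)\in\mathbb Z^2}\varphi_{n,m}U_1^nU_2^m$ with the standard bimodule structure. $\sigma$ is the automorphism $\sigma(U_j)=U_j^{-1}$, and ${}_{-1}\mathcal A_\theta^{alg*}$ is $\mathcal A_\theta^{alg*}$ with bimodule structure $\alpha\cdot a=\sigma(\alpha)a$, $a\cdot\alpha=a\alpha$. $H^\bullet$ is Hochschild cohomology. *)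

theory Defs
  imports Complex_Main
begin

text \<open>The algebraic noncommutative torus A_theta^alg: an element sum a_{n,m} U1^n U2^m
  is represented by its coefficient function int*int => complex with finite support.
  Basis monomials multiply as U1^a U2^b * U1^c U2^d = lambda^(b c) U1^(a+c) U2^(b+d),
  from U2 U1 = lambda U1 U2, lambda = exp(2 pi i theta).\<close>

definition lam :: "real \<Rightarrow> int \<Rightarrow> complex" where
  "lam \<theta> k = cis (2 * pi * \<theta> * real_of_int k)"

definition supp :: "(int \<times> int \<Rightarrow> complex) \<Rightarrow> (int \<times> int) set" where
  "supp x = {p. x p \<noteq> 0}"

definition fin :: "(int \<times> int \<Rightarrow> complex) \<Rightarrow> bool" where
  "fin x \<longleftrightarrow> finite (supp x)"

definition basis :: "int \<times> int \<Rightarrow> (int \<times> int \<Rightarrow> complex)" where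
  "basis k = (\<lambda>p. if p = k then 1 else 0)"

definition tmul :: "real \<Rightarrow> (int \<times> int \<Rightarrow> complex) \<Rightarrow> (int \<times> int \<Rightarrow> complex) \<Rightarrow> (int \<times> int \<Rightarrow> complex)" where
  "tmul \<theta> x y = (\<lambda>r. \<Sum>(p,q)\<in>{(p,q). p \<in> supp x \<and> q \<in> supp y \<and>
       fst p + fst q = fst r \<and> snd p + snd q = snd r}.
       x p * y q * lam \<theta> (snd p * fst q))"

text \<open>The linear dual A_theta^alg*: a linear functional is determined by its (arbitrary)
  values phi(n,m) on the basis monomials U1^n U2^m; it acts by the pairing below.\<close>
definition pair :: "(int \<times> int \<Rightarrow> complex) \<Rightarrow> (int \<times> int \<Rightarrow> complex) \<Rightarrow> complex" where
  "pair \<phi> x = (\<Sum>p\<in>supp x. x p * \<phi> p)"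

definition lact :: "real \<Rightarrow> (int \<times> int \<Rightarrow> complex) \<Rightarrow> (int \<times> int \<Rightarrow> complex) \<Rightarrow> (int \<times> int \<Rightarrow> complex)" where
  "lact \<theta> a \<phi> = (\<lambda>k. pair \<phi> (tmul \<theta> (basis k) a))"

definition ract :: "real \<Rightarrow> (int \<times> int \<Rightarrow> complex) \<Rightarrow> (int \<times> int \<Rightarrow> complex) \<Rightarrow> (int \<times> int \<Rightarrow> complex)" where
  "ract \<theta> \<phi> a = (\<lambda>k. pair \<phi> (tmul \<theta> a (basis k)))"

definition sigma :: "(int \<times> int \<Rightarrow> complex) \<Rightarrow> (int \<times> int \<Rightarrow> complex)" where
  "sigma x = (\<lambda>(n, m). x (-n, -m))"

text \<open>Left action of the twisted bimodule _{-1}A*: alpha . a = sigma(alpha) a.\<close>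
definition tw_lact :: "real \<Rightarrow> (int \<times> int \<Rightarrow> complex) \<Rightarrow> (int \<times> int \<Rightarrow> complex) \<Rightarrow> (int \<times> int \<Rightarrow> complex)" where
  "tw_lact \<theta> a \<phi> = lact \<theta> (sigma a) \<phi>"

definition hoch_cocycle1 :: "real \<Rightarrow> ((int \<times> int \<Rightarrow> complex) \<Rightarrow> (int \<times> int \<Rightarrow> complex)) \<Rightarrow> bool" where
  "hoch_cocycle1 \<theta> D \<longleftrightarrow>
     (\<forall>x y. fin x \<longrightarrow> fin y \<longrightarrow> D (\<lambda>p. x p + y p) = (\<lambda>k. D x k + D y k)) \<and>
     (\<forall>c x. fin x \<longrightarrow> D (\<lambda>p. c * x p) = (\<lambda>k. c * D x k)) \<and>
     (\<forall>a b. fin a \<longrightarrow> fin b \<longrightarrow>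
        D (tmul \<theta> a b) = (\<lambda>k. tw_lact \<theta> a (D b) k + ract \<theta> (D a) b k))"

definition hoch_coboundary1 :: "real \<Rightarrow> ((int \<times> int \<Rightarrow> complex) \<Rightarrow> (int \<times> int \<Rightarrow> complex)) \<Rightarrow> bool" where
  "hoch_coboundary1 \<theta> D \<longleftrightarrow>
     (\<exists>\<phi>. \<forall>a. fin a \<longrightarrow> D a = (\<lambda>k. tw_lact \<theta> a \<phi> k - ract \<theta> \<phi> a k))"

definition H1_twisted_dual_zero :: "real \<Rightarrow> bool" where
  "H1_twisted_dual_zero \<theta> \<longleftrightarrow> (\<forall>D. hoch_cocycle1 \<theta> D \<longrightarrow> hoch_coboundary1 \<theta> D)"

end

theory Submission
  imports Defs
begin

lemma lam_add: "lam \<theta> (a+b) = lam \<theta> a * lam \<theta> b"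
  unfolding lam_def by (simp add: cis_mult ring_distribs)

lemma lam2: "a + b = c \<Longrightarrow> lam \<theta> a * lam \<theta> b = lam \<theta> c"
  by (metis lam_add)

lemma lam_0[simp]: "lam \<theta> 0 = 1" by (simp add: lam_def)

lemma lam_nz[simp]: "lam \<theta> a \<noteq> 0" by (simp add: lam_def)

lemma lam_inv: "lam \<theta> a * lam \<theta> (-a) = 1"
  using lam2[of a "-a" 0 \<theta>] by simp

lemma supp_basis[simp]: "supp (basis k) = {k}"
  by (auto simp: supp_def basis_def)

lemma fin_basis[simp]: "fin (basis k)" by (simp add: fin_def)

lemma tmul_basis_left:
  "tmul \<theta> (basis k) b = (\<lambda>r. lam \<theta> (snd k * (fst r - fst k)) * b (fst r - fst k, snd r - snd k))"
proof
  fix r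
  let ?S = "{(p,q). p \<in> supp (basis k) \<and> q \<in> supp b \<and> fst p + fst q = fst r \<and> snd p + snd q = snd r}"
  let ?q = "(fst r - fst k, snd r - snd k)"
  show "tmul \<theta> (basis k) b r = lam \<theta> (snd k * (fst r - fst k)) * b (fst r - fst k, snd r - snd k)"
  proof (cases "b ?q = 0")
    case True
    then have S: "?S = {}" by (auto simp: supp_def basis_def) (metis add_diff_cancel_left' add_diff_cancel_right')
    show ?thesis using True unfolding tmul_def S by simp
  next
    case False
    then have "?S = {(k, ?q)}" by (auto simp: supp_def basis_def split: if_splits)
    then show ?thesis unfolding tmul_def by (simp only:) (simp add: basis_def)
  qed
qed

lemma tmul_basis_right:
  "tmul \<theta> a (basis k) = (\<lambda>r. a (fst r - fst k, snd r - snd k) * lam \<theta> ((snd r - snd k) * fst k))"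
proof
  fix r
  let ?S = "{(p,q). p \<in> supp a \<and> q \<in> supp (basis k) \<and> fst p + fst q = fst r \<and> snd p + snd q = snd r}"
  let ?q = "(fst r - fst k, snd r - snd k)"
  show "tmul \<theta> a (basis k) r = a (fst r - fst k, snd r - snd k) * lam \<theta> ((snd r - snd k) * fst k)"
  proof (cases "a ?q = 0")
    case True
    then have S: "?S = {}" by (auto simp: supp_def basis_def) (metis add_diff_cancel_left' add_diff_cancel_right')
    show ?thesis using True unfolding tmul_def S by simp
  next
    case False
    then have "?S = {(?q, k)}" by (auto simp: supp_def basis_def)
    then show ?thesis unfolding tmul_def by (simp only:) (simp add: basis_def)
  qed
qed

lemma pair_sum: "finite S \<Longrightarrow> supp x \<subseteq> S \<Longrightarrow> pair \<phi> x = (\<Sum>p\<in>S. x p * \<phi> p)"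
  unfolding pair_def by (rule sum.mono_neutral_left) (auto simp: supp_def)

lemma tw_formula:
  assumes "fin a"
  shows "tw_lact \<theta> a \<phi> k = (\<Sum>p\<in>supp a. a p * (lam \<theta> (-(snd k * fst p)) * \<phi> (fst k - fst p, snd k - snd p)))"
proof -
  define m where "m = (\<lambda>p::int\<times>int. (fst k - fst p, snd k - snd p))"
  define x where "x = tmul \<theta> (basis k) (sigma a)"
  have x: "x = (\<lambda>r. lam \<theta> (snd k * (fst r - fst k)) * a (fst k - fst r, snd k - snd r))"
    unfolding x_def tmul_basis_left sigma_def by simp
  have inj: "inj m" unfolding m_def inj_def by (auto simp: prod_eq_iff)
  have sub: "supp x \<subseteq> m ` supp a"
  proof
    fix r assume "r \<in> supp x"
    then have "a (fst k - fst r, snd k - snd r) \<noteq> 0" by (simp add: supp_def x)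
    then show "r \<in> m ` supp a" unfolding m_def supp_def
      by (intro image_eqI[where x="(fst k - fst r, snd k - snd r)"]) auto
  qed
  have "tw_lact \<theta> a \<phi> k = pair \<phi> x" unfolding tw_lact_def lact_def x_def by simp
  also have "\<dots> = (\<Sum>r\<in>m ` supp a. x r * \<phi> r)" using sub assms by (intro pair_sum) (auto simp: fin_def)
  also have "\<dots> = (\<Sum>p\<in>supp a. x (m p) * \<phi> (m p))"
    by (simp add: sum.reindex inj_on_subset[OF inj])
  also have "\<dots> = (\<Sum>p\<in>supp a. a p * (lam \<theta> (-(snd k * fst p)) * \<phi> (fst k - fst p, snd k - snd p)))"
    by (intro sum.cong) (auto simp: x m_def)
  finally show ?thesis .
qed

lemma ract_formula:
  assumes "fin a"
  shows "ract \<theta> \<phi> a k = (\<Sum>p\<in>supp a. a p * (lam \<theta> (snd p * fst k) * \<phi> (fst p + fst k, snd p + snd k)))"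
proof -
  define m where "m = (\<lambda>p::int\<times>int. (fst p + fst k, snd p + snd k))"
  define x where "x = tmul \<theta> a (basis k)"
  have x: "x = (\<lambda>r. a (fst r - fst k, snd r - snd k) * lam \<theta> ((snd r - snd k) * fst k))"
    unfolding x_def tmul_basis_right by simp
  have inj: "inj m" unfolding m_def inj_def by (auto simp: prod_eq_iff)
  have sub: "supp x \<subseteq> m ` supp a"
  proof
    fix r assume "r \<in> supp x"
    then have "a (fst r - fst k, snd r - snd k) \<noteq> 0" by (simp add: supp_def x)
    then show "r \<in> m ` supp a" unfolding m_def supp_def
      by (intro image_eqI[where x="(fst r - fst k, snd r - snd k)"]) auto
  qed
  have "ract \<theta> \<phi> a k = pair \<phi> x" unfolding ract_def x_def by simp
  also have "\<dots> = (\<Sum>r\<in>m ` supp a. x r * \<phi> r)" using sub assms by (intro pair_sum) (auto simp: fin_def)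
  also have "\<dots> = (\<Sum>p\<in>supp a. x (m p) * \<phi> (m p))"
    by (simp add: sum.reindex inj_on_subset[OF inj])
  also have "\<dots> = (\<Sum>p\<in>supp a. a p * (lam \<theta> (snd p * fst k) * \<phi> (fst p + fst k, snd p + snd k)))"
    by (intro sum.cong) (auto simp: x m_def)
  finally show ?thesis .
qed


lemma lam4: "a + b = c + d \<Longrightarrow> lam \<theta> a * lam \<theta> b = lam \<theta> c * lam \<theta> d"
  by (metis lam_add)

definition dlt :: "real \<Rightarrow> (int \<times> int \<Rightarrow> complex) \<Rightarrow> int \<times> int \<Rightarrow> int \<times> int \<Rightarrow> complex" where
  "dlt \<theta> \<phi> p k = lam \<theta> (-(snd k * fst p)) * \<phi> (fst k - fst p, snd k - snd p)
     - lam \<theta> (snd p * fst k) * \<phi> (fst p + fst k, snd p + snd k)"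

lemma cob_formula: "fin a \<Longrightarrow> tw_lact \<theta> a \<phi> k - ract \<theta> \<phi> a k = (\<Sum>p\<in>supp a. a p * dlt \<theta> \<phi> p k)"
  by (simp add: tw_formula ract_formula dlt_def sum_subtractf[symmetric] right_diff_distrib)

lemma a_expand: assumes "fin a" shows "(\<lambda>r. \<Sum>p\<in>supp a. a p * basis p r) = a"
proof
  fix r
  have "(\<Sum>p\<in>supp a. a p * basis p r) = (\<Sum>p\<in>supp a. if r = p then a p else 0)"
    by (intro sum.cong) (auto simp: basis_def)
  also have "\<dots> = a r" using \<open>fin a\<close> by (auto simp: supp_def fin_def)
  finally show "(\<Sum>p\<in>supp a. a p * basis p r) = a r" .
qed

lemma D_expand:
  assumes add: "\<forall>x y. fin x \<longrightarrow> fin y \<longrightarrow> D (\<lambda>p. x p + y p) = (\<lambda>k. D x k + D y k)"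
  and sm: "\<forall>c x. fin x \<longrightarrow> D (\<lambda>p. c * x p) = (\<lambda>k. c * D x k)"
  and "finite S"
  shows "D (\<lambda>r. \<Sum>p\<in>S. c p * basis p r) = (\<lambda>k. \<Sum>p\<in>S. c p * D (basis p) k)"
  using assms(3)
proof (induction S rule: finite_induct)
  case empty
  have "D (\<lambda>p. 0 * basis (0,0) p) = (\<lambda>k. 0 * D (basis (0,0)) k)" using sm fin_basis by blast
  then show ?case by simp
next
  case (insert q S)
  have f1: "fin (\<lambda>r. c q * basis q r)"
    unfolding fin_def by (rule finite_subset[of _ "{q}"]) (auto simp: supp_def basis_def)
  have f2: "fin (\<lambda>r. \<Sum>p\<in>S. c p * basis p r)"
    unfolding fin_def
  proof (rule finite_subset[OF _ insert.hyps(1)])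
    show "supp (\<lambda>r. \<Sum>p\<in>S. c p * basis p r) \<subseteq> S"
    proof
      fix r assume r: "r \<in> supp (\<lambda>r. \<Sum>p\<in>S. c p * basis p r)"
      show "r \<in> S"
      proof (rule ccontr)
        assume "r \<notin> S"
        then have "(\<Sum>p\<in>S. c p * basis p r) = 0" by (intro sum.neutral) (auto simp: basis_def)
        then show False using r by (simp add: supp_def)
      qed
    qed
  qed
  have "D (\<lambda>r. \<Sum>p\<in>insert q S. c p * basis p r) = D (\<lambda>r. c q * basis q r + (\<Sum>p\<in>S. c p * basis p r))"
    using insert by simp
  also have "\<dots> = (\<lambda>k. D (\<lambda>r. c q * basis q r) k + D (\<lambda>r. \<Sum>p\<in>S. c p * basis p r) k)"
    using add f1 f2 by blast
  also have "\<dots> = (\<lambda>k. c q * D (basis q) k + (\<Sum>p\<in>S. c p * D (basis p) k))"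
    using sm fin_basis insert.IH by simp
  finally show ?case using insert by simp
qed

lemma Rel_D:
  assumes sm: "\<forall>c x. fin x \<longrightarrow> D (\<lambda>p. c * x p) = (\<lambda>k. c * D x k)"
  and leib: "\<forall>a b. fin a \<longrightarrow> fin b \<longrightarrow> D (tmul \<theta> a b) = (\<lambda>k. tw_lact \<theta> a (D b) k + ract \<theta> (D a) b k)"
  shows "lam \<theta> (p2*q1) * D (basis (p1+q1,p2+q2)) (k1,k2) =
    lam \<theta> (-(k2*p1)) * D (basis (q1,q2)) (k1-p1,k2-p2) + lam \<theta> (q2*k1) * D (basis (p1,p2)) (q1+k1,q2+k2)"
proof -
  have t: "tmul \<theta> (basis (p1,p2)) (basis (q1,q2)) = (\<lambda>r. lam \<theta> (p2*q1) * basis (p1+q1,p2+q2) r)"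
    unfolding tmul_basis_left by (auto simp: basis_def fun_eq_iff)
  have "D (tmul \<theta> (basis (p1,p2)) (basis (q1,q2))) (k1,k2) = lam \<theta> (p2*q1) * D (basis (p1+q1,p2+q2)) (k1,k2)"
    unfolding t using sm fin_basis by simp
  moreover have "D (tmul \<theta> (basis (p1,p2)) (basis (q1,q2))) (k1,k2) =
     tw_lact \<theta> (basis (p1,p2)) (D (basis (q1,q2))) (k1,k2) + ract \<theta> (D (basis (p1,p2))) (basis (q1,q2)) (k1,k2)"
    using leib by simp
  ultimately show ?thesis by (simp add: tw_formula ract_formula) (simp add: basis_def)
qed

lemma Rel_dlt: "lam \<theta> (p2*q1) * dlt \<theta> \<phi> (p1+q1,p2+q2) (k1,k2) =
    lam \<theta> (-(k2*p1)) * dlt \<theta> \<phi> (q1,q2) (k1-p1,k2-p2) + lam \<theta> (q2*k1) * dlt \<theta> \<phi> (p1,p2) (q1+k1,q2+k2)"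
proof -
  have a1: "\<phi> (k1 - (p1+q1), k2 - (p2+q2)) = \<phi> (k1 - p1 - q1, k2 - p2 - q2)" by (simp add: algebra_simps)
  have a2: "\<phi> (q1 + (k1 - p1), q2 + (k2 - p2)) = \<phi> (q1 + k1 - p1, q2 + k2 - p2)" by (simp add: algebra_simps)
  have a3: "\<phi> (p1 + (q1 + k1), p2 + (q2 + k2)) = \<phi> (p1 + q1 + k1, p2 + q2 + k2)" by (simp add: algebra_simps)
  have c1: "lam \<theta> (p2*q1) * lam \<theta> (-(k2*(p1+q1))) = lam \<theta> (-(k2*p1)) * lam \<theta> (-((k2-p2)*q1))"
    by (rule lam4) (simp add: algebra_simps)
  have c2: "lam \<theta> (-(k2*p1)) * lam \<theta> (q2*(k1-p1)) = lam \<theta> (q2*k1) * lam \<theta> (-((q2+k2)*p1))"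
    by (rule lam4) (simp add: algebra_simps)
  have c3: "lam \<theta> (p2*q1) * lam \<theta> ((p2+q2)*k1) = lam \<theta> (q2*k1) * lam \<theta> (p2*(q1+k1))"
    by (rule lam4) (simp add: algebra_simps)
  show ?thesis unfolding dlt_def fst_conv snd_conv a1 a2 a3
    using c1 c2 c3 by algebra
qed


lemma propagate:
  fixes \<Delta> :: "int \<times> int \<Rightarrow> int \<times> int \<Rightarrow> complex"
  assumes rel: "\<And>p1 p2 q1 q2 k1 k2. lam \<theta> (p2*q1) * \<Delta> (p1+q1, p2+q2) (k1,k2) =
     lam \<theta> (-(k2*p1)) * \<Delta> (q1,q2) (k1-p1,k2-p2) + lam \<theta> (q2*k1) * \<Delta> (p1,p2) (q1+k1, q2+k2)"
  and e1: "\<And>k. \<Delta> (1,0) k = 0" and e2: "\<And>k. \<Delta> (0,1) k = 0"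
  shows "\<Delta> p k = 0"
proof -
  have up1: "\<Delta> (p1+1,p2) k = 0" if h: "\<And>k. \<Delta> (p1,p2) k = 0" for p1 p2 k
  proof -
    obtain k1 k2 where k: "k = (k1,k2)" by (cases k)
    have "lam \<theta> p2 * \<Delta> (p1+1, p2) (k1,k2) = 0"
      using rel[of p2 1 p1 0 k1 k2] e1 h by simp
    then show ?thesis using k by simp
  qed
  have down1: "\<Delta> (p1-1,p2) k = 0" if h: "\<And>k. \<Delta> (p1,p2) k = 0" for p1 p2 k
  proof -
    obtain k1 k2 where k: "k = (k1,k2)" by (cases k)
    have "\<Delta> (p1-1, p2) (1 + (k1-1), 0 + k2) = 0"
      using rel[of p2 1 "p1-1" 0 "k1-1" k2] e1 h by simp
    then show ?thesis using k by simp
  qed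
  have up2: "\<Delta> (p1,p2+1) k = 0" if h: "\<And>k. \<Delta> (p1,p2) k = 0" for p1 p2 k
  proof -
    obtain k1 k2 where k: "k = (k1,k2)" by (cases k)
    have "\<Delta> (p1, p2+1) (k1,k2) = 0"
      using rel[of p2 0 p1 1 k1 k2] e2 h by simp
    then show ?thesis using k by simp
  qed
  have down2: "\<Delta> (p1,p2-1) k = 0" if h: "\<And>k. \<Delta> (p1,p2) k = 0" for p1 p2 k
  proof -
    obtain k1 k2 where k: "k = (k1,k2)" by (cases k)
    have "lam \<theta> k1 * \<Delta> (p1, p2-1) (0 + k1, 1 + (k2-1)) = 0"
      using rel[of "p2-1" 0 p1 1 k1 "k2-1"] e2 h by simp
    then show ?thesis using k by simp
  qed
  have row: "\<Delta> (n,0) k = 0" for n k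
  proof -
    have "\<forall>k. \<Delta> (n,0) k = 0"
    proof (induction n rule: int_induct[where k=1])
      case base then show ?case using e1 by simp
    next
      case (step1 i) then show ?case using up1 by blast
    next
      case (step2 i) then show ?case using down1 by blast
    qed
    then show ?thesis by (cases k) simp
  qed
  obtain n m where p: "p = (n,m)" by (cases p)
  have "\<forall>k. \<Delta> (n,m) k = 0"
  proof (induction m rule: int_induct[where k=0])
    case base then show ?case using row by simp
  next
    case (step1 i) then show ?case using up2 by blast
  next
    case (step2 i) then show ?case using down2 by blast
  qed
  then show ?thesis using p by (cases k) simp
qed

fun fw :: "(int \<Rightarrow> complex) \<Rightarrow> (int \<Rightarrow> complex) \<Rightarrow> complex \<Rightarrow> nat \<Rightarrow> complex" where
  "fw c d a 0 = a" | "fw c d a (Suc m) = c (int m) * fw c d a m + d (int m)"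

fun bw :: "(int \<Rightarrow> complex) \<Rightarrow> (int \<Rightarrow> complex) \<Rightarrow> complex \<Rightarrow> nat \<Rightarrow> complex" where
  "bw c d a 0 = a" | "bw c d a (Suc m) = (bw c d a m - d (- int m - 1)) / c (- int m - 1)"

lemma rec1:
  assumes nz: "\<And>n. c n \<noteq> 0"
  shows "\<exists>x::int\<Rightarrow>complex. x 0 = a \<and> (\<forall>n. x (n+1) = c n * x n + d n)"
proof -
  define x where "x n = (if n \<ge> 0 then fw c d a (nat n) else bw c d a (nat (-n)))" for n
  have "x (n+1) = c n * x n + d n" for n
  proof (cases "n \<ge> 0")
    case True
    then have "nat (n+1) = Suc (nat n)" by simp
    then show ?thesis using True by (simp add: x_def)
  next
    case False
    define m where "m = nat (-n-1)"
    have n: "n = - int m - 1" using False by (simp add: m_def)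
    have nn: "nat (-n) = Suc m" using False by (simp add: m_def)
    have xn: "x n = bw c d a (Suc m)" using False by (simp add: x_def nn)
    have ni: "nat (int j + 1) = Suc j" for j :: nat
      proof - have "int j + 1 = int (Suc j)" by simp then show ?thesis by (metis nat_int) qed
    have xn1: "x (n+1) = bw c d a m" using False by (cases m) (auto simp: x_def n ni simp del: bw.simps(2))
    show ?thesis unfolding xn xn1 using nz[of n] by (simp add: n)
  qed
  moreover have "x 0 = a" by (simp add: x_def)
  ultimately show ?thesis by blast
qed

lemma rec2:
  assumes nz: "\<And>n. c n \<noteq> 0"
  shows "\<exists>x::int\<Rightarrow>complex. x 0 = a0 \<and> x 1 = a1 \<and> (\<forall>n. x (n+2) = c n * x n + d n)"
proof -
  obtain y0 where y0: "y0 0 = a0" "\<forall>m. y0 (m+1) = c (2*m) * y0 m + d (2*m)"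
    using rec1[of "\<lambda>m. c (2*m)" a0 "\<lambda>m. d (2*m)"] nz by blast
  obtain y1 where y1: "y1 0 = a1" "\<forall>m. y1 (m+1) = c (2*m+1) * y1 m + d (2*m+1)"
    using rec1[of "\<lambda>m. c (2*m+1)" a1 "\<lambda>m. d (2*m+1)"] nz by blast
  define x where "x n = (if even n then y0 (n div 2) else y1 (n div 2))" for n :: int
  have "x (n+2) = c n * x n + d n" for n
  proof (cases "even n")
    case True
    then obtain j where j: "n = 2*j" by blast
    have "(2*j+2) div 2 = j + 1" by simp
    then show ?thesis using y0 by (simp add: x_def j)
  next
    case False
    then obtain j where j: "n = 2*j+1" by (metis oddE)
    have "(2*j+1+2) div 2 = j + 1" by simp
    moreover have "(2*j+1) div 2 = j" by simp
    ultimately show ?thesis using y1 by (simp add: x_def j)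
  qed
  moreover have "x 0 = a0" "x 1 = a1" using y0 y1 by (simp_all add: x_def)
  ultimately show ?thesis by blast
qed


theorem mainTheorem7:
  fixes \<theta> :: real
  assumes "\<theta> \<notin> \<rat>"
  shows "H1_twisted_dual_zero \<theta>"
  unfolding H1_twisted_dual_zero_def
proof (intro allI impI)
  fix D assume "hoch_cocycle1 \<theta> D"
  then have add: "\<forall>x y. fin x \<longrightarrow> fin y \<longrightarrow> D (\<lambda>p. x p + y p) = (\<lambda>k. D x k + D y k)"
    and sm: "\<forall>c x. fin x \<longrightarrow> D (\<lambda>p. c * x p) = (\<lambda>k. c * D x k)"
    and leib: "\<forall>a b. fin a \<longrightarrow> fin b \<longrightarrow> D (tmul \<theta> a b) = (\<lambda>k. tw_lact \<theta> a (D b) k + ract \<theta> (D a) b k)"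
    unfolding hoch_cocycle1_def by blast+
  note RD = Rel_D[OF sm leib]
  define f where "f k1 k2 = D (basis (1,0)) (k1,k2)" for k1 k2
  define g where "g k1 k2 = D (basis (0,1)) (k1,k2)" for k1 k2
  have compat: "lam \<theta> 1 * (lam \<theta> (-k2) * g (k1-1) k2 + lam \<theta> k1 * f k1 (k2+1)) = f k1 (k2-1) + g (k1+1) k2" for k1 k2
  proof -
    have h1: "lam \<theta> 1 * D (basis (1,1)) (k1,k2) = f k1 (k2-1) + g (k1+1) k2"
      using RD[where ?p1.0=0 and ?p2.0=1 and ?q1.0=1 and ?q2.0=0 and ?k1.0=k1 and ?k2.0=k2] by (simp add: f_def g_def add.commute)
    have h2: "D (basis (1,1)) (k1,k2) = lam \<theta> (-k2) * g (k1-1) k2 + lam \<theta> k1 * f k1 (k2+1)"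
      using RD[where ?p1.0=1 and ?p2.0=0 and ?q1.0=0 and ?q2.0=1 and ?k1.0=k1 and ?k2.0=k2] by (simp add: f_def g_def add.commute)
    show ?thesis using h1 h2 by simp
  qed
  obtain R0 where R0: "\<forall>n. R0 (n+2) = 1 * R0 n + (- f (n+1) 0)"
    using rec2[of "\<lambda>n. 1" 0 0 "\<lambda>n. - f (n+1) 0"] by auto
  obtain R1 where R1: "\<forall>n. R1 (n+2) = lam \<theta> (-1) * R1 n + (- f (n+1) 1)"
    using rec2[of "\<lambda>n. lam \<theta> (-1)" 0 0 "\<lambda>n. - f (n+1) 1"] by auto
  have "\<forall>k1. \<exists>C. C 0 = R0 k1 \<and> C 1 = R1 k1 \<and> (\<forall>n. C (n+2) = lam \<theta> (-k1) * C n + (- lam \<theta> (-k1) * g k1 (n+1)))"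
  proof
    fix k1 show "\<exists>C. C 0 = R0 k1 \<and> C 1 = R1 k1 \<and> (\<forall>n. C (n+2) = lam \<theta> (-k1) * C n + (- lam \<theta> (-k1) * g k1 (n+1)))"
      using rec2[of "\<lambda>n. lam \<theta> (-k1)" "R0 k1" "R1 k1" "\<lambda>n. - lam \<theta> (-k1) * g k1 (n+1)"] by simp
  qed
  then obtain Cf where Cf: "\<And>k1. Cf k1 0 = R0 k1 \<and> Cf k1 1 = R1 k1 \<and> (\<forall>n. Cf k1 (n+2) = lam \<theta> (-k1) * Cf k1 n + (- lam \<theta> (-k1) * g k1 (n+1)))"
    by metis
  define phi where "phi = (\<lambda>k. Cf (fst k) (snd k))"
  have colrec: "phi (x, n+2) = lam \<theta> (-x) * phi (x, n) - lam \<theta> (-x) * g x (n+1)" for x n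
    using Cf[of x] by (simp add: phi_def)
  have HB: "D (basis (0,1)) k = dlt \<theta> phi (0,1) k" for k
  proof -
    obtain k1 k2 where k: "k = (k1,k2)" by (cases k)
    have "phi (k1, k2 - 1 + 2) = lam \<theta> (-k1) * phi (k1, k2 - 1) - lam \<theta> (-k1) * g k1 (k2 - 1 + 1)"
      by (rule colrec)
    then have c: "phi (k1, 1 + k2) = lam \<theta> (-k1) * phi (k1, k2 - 1) - lam \<theta> (-k1) * g k1 k2"
      by (simp add: add.commute)
    have i: "lam \<theta> k1 * lam \<theta> (-k1) = 1" by (rule lam_inv)
    show ?thesis unfolding k dlt_def fst_conv snd_conv g_def[symmetric]
      using c i by simp algebra
  qed
  define E where "E k2 k1 = lam \<theta> (-k2) * phi (k1-1,k2) - phi (k1+1,k2) - f k1 k2" for k2 k1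
  have E0: "E 0 k1 = 0" for k1
  proof -
    have a: "k1 - 1 + 2 = k1 + 1" "k1 - 1 + 1 = k1" by simp_all
    have "R0 (k1 - 1 + 2) = 1 * R0 (k1-1) + (- f (k1 - 1 + 1) 0)" using R0 by blast
    then show ?thesis unfolding a E_def phi_def using Cf by simp
  qed
  have E1: "E 1 k1 = 0" for k1
  proof -
    have a: "k1 - 1 + 2 = k1 + 1" "k1 - 1 + 1 = k1" by simp_all
    have "R1 (k1 - 1 + 2) = lam \<theta> (-1) * R1 (k1-1) + (- f (k1 - 1 + 1) 1)" using R1 by blast
    then show ?thesis unfolding a E_def phi_def using Cf by simp
  qed
  have Erel0: "E (k2+1) k1 = lam \<theta> (-k1-1) * E (k2-1) k1" for k1 k2
  proof -
    have c1: "phi (k1-1, k2+1) = lam \<theta> (-(k1-1)) * phi (k1-1, k2-1) - lam \<theta> (-(k1-1)) * g (k1-1) k2"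
      using colrec[of "k1-1" "k2-1"] by (simp add: add.commute)
    have c2: "phi (k1+1, k2+1) = lam \<theta> (-(k1+1)) * phi (k1+1, k2-1) - lam \<theta> (-(k1+1)) * g (k1+1) k2"
      using colrec[of "k1+1" "k2-1"] by (simp add: add.commute)
    have j1: "lam \<theta> 1 * lam \<theta> k1 * lam \<theta> (-k1-1) = 1"
    proof -
      have "lam \<theta> 1 * lam \<theta> k1 = lam \<theta> (k1+1)" by (rule lam2) simp
      moreover have "lam \<theta> (k1+1) * lam \<theta> (-k1-1) = 1" using lam_inv[of \<theta> "k1+1"] by simp
      ultimately show ?thesis by simp
    qed
    have j2: "lam \<theta> (-(k2+1)) * lam \<theta> (-(k1-1)) = lam \<theta> (-k1-1) * lam \<theta> (-(k2-1))"
      by (rule lam4) simp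
    have j3: "lam \<theta> (-(k1+1)) = lam \<theta> (-k1-1)" by simp
    have j4: "lam \<theta> (-(k2+1)) * lam \<theta> (-(k1-1)) = lam \<theta> (-k1-1) * (lam \<theta> 1 * lam \<theta> (-k2))"
    proof -
      have "lam \<theta> 1 * lam \<theta> (-k2) = lam \<theta> (1-k2)" by (rule lam2) simp
      moreover have "lam \<theta> (-(k2+1)) * lam \<theta> (-(k1-1)) = lam \<theta> (-k1-1) * lam \<theta> (1-k2)" by (rule lam4) simp
      ultimately show ?thesis by simp
    qed
    show ?thesis unfolding E_def c1 c2 j3
      using compat[of k2 k1] j1 j2 j4 by algebra
  qed
  have Erel: "E (j+2) k1 = lam \<theta> (-k1-1) * E j k1" for j k1
    using Erel0[of "j+1" k1] by (simp add: add.commute)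
  have Eall: "E k2 k1 = 0" for k2 k1
  proof -
    have "\<forall>k1. E k2 k1 = 0 \<and> E (k2+1) k1 = 0"
    proof (induction k2 rule: int_induct[where k=0])
      case base then show ?case using E0 E1 by simp
    next
      case (step1 i) then show ?case using Erel[of i] by (simp add: add.assoc)
    next
      case (step2 i)
      have "E (i-1) k1 = 0" for k1
        using Erel[of "i-1" k1] step2.IH by (simp add: add.commute)
      then show ?case using step2.IH by simp
    qed
    then show ?thesis by simp
  qed
  have HA: "D (basis (1,0)) k = dlt \<theta> phi (1,0) k" for k
  proof -
    obtain k1 k2 where k: "k = (k1,k2)" by (cases k)
    have "E k2 k1 = 0" by (rule Eall)
    then show ?thesis unfolding k dlt_def fst_conv snd_conv E_def f_def by (simp add: add.commute)
  qed
  define Dl where "Dl p k = D (basis p) k - dlt \<theta> phi p k" for p k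
  have relDl: "lam \<theta> (p2*q1) * Dl (p1+q1, p2+q2) (k1,k2) =
     lam \<theta> (-(k2*p1)) * Dl (q1,q2) (k1-p1,k2-p2) + lam \<theta> (q2*k1) * Dl (p1,p2) (q1+k1, q2+k2)"
    for p1 p2 q1 q2 k1 k2
    unfolding Dl_def right_diff_distrib RD Rel_dlt by (simp add: algebra_simps)
  have Dl0: "Dl p k = 0" for p k
    by (rule propagate[where \<theta>=\<theta>, OF relDl]) (simp_all add: Dl_def HA HB)
  show "hoch_coboundary1 \<theta> D"
    unfolding hoch_coboundary1_def
  proof (intro exI allI impI)
    fix a assume fa: "fin a"
    have "D a = D (\<lambda>r. \<Sum>p\<in>supp a. a p * basis p r)" using a_expand[OF fa] by simp
    also have "\<dots> = (\<lambda>k. \<Sum>p\<in>supp a. a p * D (basis p) k)"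
      using D_expand[OF add sm] fa by (simp add: fin_def)
    also have "\<dots> = (\<lambda>k. \<Sum>p\<in>supp a. a p * dlt \<theta> phi p k)"
      using Dl0 by (simp add: Dl_def)
    also have "\<dots> = (\<lambda>k. tw_lact \<theta> a phi k - ract \<theta> phi a k)"
      using cob_formula[OF fa] by simp
    finally show "D a = (\<lambda>k. tw_lact \<theta> a phi k - ract \<theta> phi a k)" .
  qed
qed

end
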